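(* Let $R$ be a ring and $n$ a positive integer such that every proper ideal of $R$ is a weakly $n$-absorbing ideal of $R$. Then: (1) $\dim(R)=0$; (2) $R$ has at most $n+1$ prime ideals that are pairwise comaximal; in particular, $R$ has at most $n+1$ maximal ideals.
   Context: All rings are commutative with $1\neq0$. A proper ideal $I$ of $R$ is weakly $n$-absorbing if whenever $0\neq a_1\cdots a_{n+1}\in I$ with $a_1,\dots,a_{n+1}\in R$, there are $n$ of the $a_i$'s whose product is in $I$. $\dim(R)$ is the Krull dimension. *)

theory Defs
  imports "HOL-Algebra.Algebra" "HOL-Library.Extended_Nat"
begin

definition weakly_n_absorbing :: "('a, 'b) ring_scheme \<Rightarrow> nat \<Rightarrow> 'a set \<Rightarrow> bool" where
  "weakly_n_absorbing R n I \<longleftrightarrow>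
     ideal I R \<and> I \<noteq> carrier R \<and>
     (\<forall>a. a \<in> {..n} \<rightarrow> carrier R \<longrightarrow>
        finprod R a {..n} \<noteq> \<zero>\<^bsub>R\<^esub> \<longrightarrow> finprod R a {..n} \<in> I \<longrightarrow>
        (\<exists>j\<le>n. finprod R a ({..n} - {j}) \<in> I))"

definition krull_dim :: "('a, 'b) ring_scheme \<Rightarrow> enat" where
  "krull_dim R = Sup {enat (length ps - 1) | ps. ps \<noteq> [] \<and>
      (\<forall>P\<in>set ps. primeideal P R) \<and> sorted_wrt (\<subset>) ps}"

definition comaximal :: "('a, 'b) ring_scheme \<Rightarrow> 'a set \<Rightarrow> 'a set \<Rightarrow> bool" where
  "comaximal R I J \<longleftrightarrow> I <+>\<^bsub>R\<^esub> J = carrier R"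

end

theory Submission imports Defs begin

context cring begin

lemma fp_in_ideal:
  assumes "ideal I R" "finite A" "f \<in> A \<rightarrow> carrier R" "j \<in> A" "f j \<in> I"
  shows "finprod R f A \<in> I"
proof -
  have A: "A = insert j (A - {j})" using assms(4) by blast
  have "finprod R f A = f j \<otimes> finprod R f (A - {j})"
    by (subst A, rule finprod_insert) (use assms in auto)
  moreover have "finprod R f (A - {j}) \<in> carrier R"
    using assms(3) by (intro finprod_closed) auto
  ultimately show ?thesis using ideal.I_r_closed[OF assms(1) assms(5)] by simp
qed

lemma fp_notin_prime:
  assumes "primeideal P R" "finite A" "f \<in> A \<rightarrow> carrier R" "\<forall>k\<in>A. f k \<notin> P"
  shows "finprod R f A \<notin> P"
  using assms(2,3,4)
proof (induction A rule: finite_induct)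
  case empty
  have "\<one> \<notin> P" using assms(1) ideal.one_imp_carrier primeideal.I_notcarr primeideal.axioms(1) by metis
  then show ?case by simp
next
  case (insert x F)
  have "finprod R f (insert x F) = f x \<otimes> finprod R f F"
    using insert by (intro finprod_insert) auto
  moreover have "finprod R f F \<in> carrier R" using insert by (intro finprod_closed) auto
  moreover have "f x \<in> carrier R" "f x \<notin> P" "finprod R f F \<notin> P" using insert by auto
  ultimately show ?case using primeideal.I_prime[OF assms(1), of "f x" "finprod R f F"] by metis
qed

lemma sep_lemma:
  assumes "ideal P R" "finite J" "\<forall>j\<in>J. ideal (Q j) R \<and> P <+> Q j = carrier R"
  shows "\<exists>a\<in>P. \<forall>j\<in>J. \<one> \<ominus> a \<in> Q j"
  using assms(2,3)
proof (induction J rule: finite_induct)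
  case empty
  have "\<zero> \<in> P" using assms(1) additive_subgroup.zero_closed ideal.axioms(1) by blast
  then show ?case by blast
next
  case (insert x F)
  then obtain a where a: "a \<in> P" "\<forall>j\<in>F. \<one> \<ominus> a \<in> Q j" by auto
  have "\<one> \<in> P <+> Q x" using insert.prems by simp
  then obtain p q where pq: "p \<in> P" "q \<in> Q x" "\<one> = p \<oplus> q" unfolding set_add_def' by blast
  have ac: "a \<in> carrier R" using ideal.Icarr[OF assms(1) a(1)] .
  have pc: "p \<in> carrier R" using ideal.Icarr[OF assms(1) pq(1)] .
  have qx: "ideal (Q x) R" using insert.prems by simp
  have qc: "q \<in> carrier R" using ideal.Icarr[OF qx pq(2)] .
  define a' where "a' = a \<oplus> p \<ominus> a \<otimes> p"
  have "a \<otimes> p \<in> P" using ideal.I_l_closed[OF assms(1) pq(1) ac] .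
  hence "\<ominus> (a \<otimes> p) \<in> P" using additive_subgroup.a_inv_closed[OF ideal.axioms(1)[OF assms(1)]] by blast
  moreover have "a \<oplus> p \<in> P" using additive_subgroup.a_closed[OF ideal.axioms(1)[OF assms(1)] a(1) pq(1)] .
  ultimately have "a' \<in> P" unfolding a'_def minus_eq
    using additive_subgroup.a_closed[OF ideal.axioms(1)[OF assms(1)]] by blast
  moreover have eq: "\<one> \<ominus> a' = (\<one> \<ominus> a) \<otimes> q" proof -
    have "q = (p \<oplus> q) \<ominus> p" using pc qc by algebra
    hence q1: "q = \<one> \<ominus> p" using pq(3) by simp
    show ?thesis unfolding a'_def q1 using ac pc by algebra
  qed
  moreover have "(\<one> \<ominus> a) \<otimes> q \<in> Q x" using qx pq(2) ac by (intro ideal.I_l_closed) auto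
  moreover have "(\<one> \<ominus> a) \<otimes> q \<in> Q j" if "j \<in> F" for j
  proof -
    have "ideal (Q j) R" using insert.prems that by simp
    moreover have "\<one> \<ominus> a \<in> Q j" using a(2) that by blast
    ultimately show ?thesis by (rule ideal.I_r_closed[OF _ _ qc])
  qed
  ultimately have "a' \<in> P" "\<forall>j\<in>insert x F. \<one> \<ominus> a' \<in> Q j" unfolding eq by auto
  thus ?case by (intro bexI[of _ a']) auto
qed

lemma no_chain:
  assumes H: "\<And>I. ideal I R \<Longrightarrow> I \<noteq> carrier R \<Longrightarrow> weakly_n_absorbing R n I"
    and P: "primeideal P R" and Q: "primeideal Q R" and PQ: "P \<subset> Q"
  shows False
proof -
  obtain x where x: "x \<in> Q" "x \<notin> P" using PQ by blast
  have iP: "ideal P R" using P primeideal.axioms(1) by blast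
  have iQ: "ideal Q R" using Q primeideal.axioms(1) by blast
  have xc: "x \<in> carrier R" using ideal.Icarr[OF iQ x(1)] .
  have powQ: "x [^] (Suc k) \<in> Q" for k
    using ideal.I_l_closed[OF iQ x(1), of "x [^] k"] xc by simp
  define J where "J = P <+>\<^bsub>R\<^esub> PIdl (x [^] Suc n)"
  have iJ: "ideal J R" unfolding J_def by (intro add_ideals iP cgenideal_ideal) (use xc in simp)
  have JQ: "J \<subseteq> Q"
  proof
    fix y assume "y \<in> J"
    then obtain p r where "p \<in> P" "r \<in> carrier R" "y = p \<oplus> r \<otimes> x [^] Suc n"
      unfolding J_def set_add_def' cgenideal_def by blast
    moreover have "r \<otimes> x [^] Suc n \<in> Q" using ideal.I_l_closed[OF iQ powQ] \<open>r \<in> carrier R\<close> by blast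
    moreover have "p \<in> Q" using PQ \<open>p \<in> P\<close> by blast
    ultimately show "y \<in> Q" using additive_subgroup.a_closed[OF ideal.axioms(1)[OF iQ]] by simp
  qed
  have Qnc: "Q \<noteq> carrier R" using primeideal.I_notcarr[OF Q] by simp
  have QC: "Q \<subseteq> carrier R" by (rule subsetI, rule ideal.Icarr[OF iQ])
  have Jnc: "J \<noteq> carrier R" using JQ Qnc QC by (metis subset_antisym)
  have W: "weakly_n_absorbing R n J" using H[OF iJ Jnc] .
  have fc: "(\<lambda>_. x) \<in> {..n} \<rightarrow> carrier R" using xc by simp
  have fp: "finprod R (\<lambda>_. x) {..n} = x [^] Suc n" by (subst finprod_const[OF xc]) simp
  have "finprod R (\<lambda>_. x) {..n} \<notin> P" by (rule fp_notin_prime[OF P]) (use fc x in auto)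
  moreover have "\<zero> \<in> P" using additive_subgroup.zero_closed[OF ideal.axioms(1)[OF iP]] .
  ultimately have nz: "finprod R (\<lambda>_. x) {..n} \<noteq> \<zero>" by metis
  have "x [^] Suc n \<in> PIdl (x [^] Suc n)" by (rule cgenideal_self) (use xc in simp)
  hence "\<zero> \<oplus> x [^] Suc n \<in> J" unfolding J_def set_add_def' using \<open>\<zero> \<in> P\<close> by blast
  hence inJ: "finprod R (\<lambda>_. x) {..n} \<in> J" using fp xc by simp
  obtain j where j: "j \<le> n" "finprod R (\<lambda>_. x) ({..n} - {j}) \<in> J"
    using W fc nz inJ unfolding weakly_n_absorbing_def by blast
  define y where "y = finprod R (\<lambda>_. x) ({..n} - {j})"
  have yP: "y \<notin> P" unfolding y_def by (rule fp_notin_prime[OF P]) (use fc x in auto)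
  have "card ({..n} - {j}) = n" using j(1) by simp
  hence yx: "y = x [^] n" unfolding y_def by (subst finprod_const[OF xc]) simp
  have yc: "y \<in> carrier R" using yx xc by simp
  have "y \<in> J" using j(2) y_def by simp
  then obtain p r where pr: "p \<in> P" "r \<in> carrier R" "y = p \<oplus> r \<otimes> x [^] Suc n"
    unfolding J_def set_add_def' cgenideal_def by blast
  have pc: "p \<in> carrier R" using ideal.Icarr[OF iP pr(1)] .
  define z where "z = r \<otimes> (y \<otimes> x)"
  have eq: "y = p \<oplus> z" using pr(3) yx unfolding z_def by simp
  have "y \<otimes> (\<one> \<ominus> r \<otimes> x) = y \<ominus> z" unfolding z_def using yc xc pr(2) by algebra
  also have "\<dots> = (p \<oplus> z) \<ominus> z" by (simp only: eq[symmetric])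
  also have "\<dots> = p" unfolding z_def using yc xc pr(2) pc by algebra
  finally have "y \<otimes> (\<one> \<ominus> r \<otimes> x) \<in> P" using pr(1) by simp
  hence "\<one> \<ominus> r \<otimes> x \<in> P" using primeideal.I_prime[OF P yc, of "\<one> \<ominus> r \<otimes> x"] yP xc pr(2) by auto
  hence w: "\<one> \<ominus> r \<otimes> x \<in> Q" using PQ by blast
  have rx: "r \<otimes> x \<in> Q" using ideal.I_l_closed[OF iQ x(1) pr(2)] .
  have "\<one> = (\<one> \<ominus> r \<otimes> x) \<oplus> r \<otimes> x" using xc pr(2) by algebra
  hence "\<one> \<in> Q" using additive_subgroup.a_closed[OF ideal.axioms(1)[OF iQ] w rx] by simp
  thus False using ideal.one_imp_carrier[OF iQ] Qnc by blast
qed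

lemma comax_bound:
  assumes H: "\<And>I. ideal I R \<Longrightarrow> I \<noteq> carrier R \<Longrightarrow> weakly_n_absorbing R n I"
    and SP: "\<forall>P\<in>S. primeideal P R"
    and SC: "\<forall>P\<in>S. \<forall>Q\<in>S. P \<noteq> Q \<longrightarrow> comaximal R P Q"
  shows "finite S \<and> card S \<le> n + 1"
proof (rule ccontr)
  assume "\<not> (finite S \<and> card S \<le> n + 1)"
  then obtain T where T: "T \<subseteq> S" "finite T" "card T = Suc (Suc n)"
  proof (cases "finite S")
    case True
    then show ?thesis using that \<open>\<not> (finite S \<and> card S \<le> n + 1)\<close>
      by (metis Suc_eq_plus1 not_less_eq_eq obtain_subset_with_card_n)
  next
    case False
    then show ?thesis using that infinite_arbitrarily_large by blast
  qed
  obtain f where f: "bij_betw f {0..<Suc (Suc n)} T"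
    using ex_bij_betw_nat_finite[OF T(2)] T(3) by metis
  have atl: "{0..<Suc (Suc n)} = {..Suc n}" by auto
  have fT: "f i \<in> T" if "i \<le> Suc n" for i proof -
    have "i \<in> {0..<Suc (Suc n)}" using that by simp
    thus ?thesis using bij_betwE[OF f] by blast
  qed
  have finj: "f i \<noteq> f k" if "i \<le> Suc n" "k \<le> Suc n" "i \<noteq> k" for i k
  proof
    assume "f i = f k"
    moreover have "i \<in> {0..<Suc (Suc n)}" "k \<in> {0..<Suc (Suc n)}" using that by simp_all
    ultimately have "i = k" using inj_onD[OF bij_betw_imp_inj_on[OF f]] by blast
    thus False using that(3) by simp
  qed
  have fP: "primeideal (f i) R" if "i \<le> Suc n" for i proof -
    have "f i \<in> S" using T(1) fT[OF that] by (rule subsetD)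
    thus ?thesis using SP by simp
  qed
  have fI: "ideal (f i) R" if "i \<le> Suc n" for i using primeideal.axioms(1)[OF fP[OF that]] .
  have fnc: "\<one> \<notin> f i" if "i \<le> Suc n" for i
    using ideal.one_imp_carrier[OF fI[OF that]] primeideal.I_notcarr[OF fP[OF that]] by metis
  have fcm: "f i <+> f k = carrier R" if "i \<le> Suc n" "k \<le> Suc n" "i \<noteq> k" for i k
  proof -
    have "f i \<in> S" "f k \<in> S" using T(1) fT[OF that(1)] fT[OF that(2)] by (auto intro: subsetD)
    thus ?thesis using SC finj[OF that] unfolding comaximal_def by simp
  qed
  have ex: "\<exists>e. e \<in> f i \<and> (\<forall>k\<in>{..Suc n} - {i}. \<one> \<ominus> e \<in> f k)" if "i \<le> Suc n" for i
  proof -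
    have "\<exists>a\<in>f i. \<forall>k\<in>{..Suc n} - {i}. \<one> \<ominus> a \<in> f k"
      by (rule sep_lemma[OF fI[OF that]]) (use fI fcm that in auto)
    thus ?thesis by (simp add: Bex_def)
  qed
  define e where "e i = (SOME a. a \<in> f i \<and> (\<forall>k\<in>{..Suc n} - {i}. \<one> \<ominus> a \<in> f k))" for i
  have e0: "e i \<in> f i \<and> (\<forall>k\<in>{..Suc n} - {i}. \<one> \<ominus> e i \<in> f k)" if "i \<le> Suc n" for i
    unfolding e_def by (rule someI_ex[OF ex[OF that]])
  have e: "\<And>i. i \<le> Suc n \<Longrightarrow> e i \<in> f i"
    "\<And>i k. i \<le> Suc n \<Longrightarrow> k \<le> Suc n \<Longrightarrow> k \<noteq> i \<Longrightarrow> \<one> \<ominus> e i \<in> f k"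
    using e0 by auto
  have ec: "e i \<in> carrier R" if "i \<le> Suc n" for i using ideal.Icarr[OF fI[OF that] e(1)[OF that]] .
  have enot: "e i \<notin> f k" if "i \<le> Suc n" "k \<le> Suc n" "k \<noteq> i" for i k
  proof
    assume a: "e i \<in> f k"
    have "\<one> = (\<one> \<ominus> e i) \<oplus> e i" using ec[OF that(1)] by algebra
    hence "\<one> \<in> f k" using additive_subgroup.a_closed[OF ideal.axioms(1)[OF fI[OF that(2)]] e(2)[OF that] a] by simp
    thus False using fnc[OF that(2)] by blast
  qed
  define I where "I = \<Inter> (f ` {..n})"
  have iI: "ideal I R" unfolding I_def by (rule i_Intersect) (use fI in auto)
  have I0: "I \<subseteq> f 0" unfolding I_def by (rule Inter_lower) simp
  have C0: "f 0 \<subseteq> carrier R" by (rule subsetI, rule ideal.Icarr[OF fI]) auto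
  have Inc: "I \<noteq> carrier R"
  proof
    assume "I = carrier R"
    hence "\<one> \<in> I" by simp
    hence "\<one> \<in> f 0" by (rule subsetD[OF I0])
    thus False using fnc[of 0] by simp
  qed
  have W: "weakly_n_absorbing R n I" using H[OF iI Inc] .
  have efc: "e \<in> {..n} \<rightarrow> carrier R" using ec by simp
  have inI: "finprod R e {..n} \<in> I" unfolding I_def
  proof (rule InterI)
    fix Y assume "Y \<in> f ` {..n}"
    then obtain i where i: "i \<le> n" "Y = f i" by blast
    have "finprod R e {..n} \<in> f i"
      by (rule fp_in_ideal[OF fI _ efc, of i i]) (use i e in auto)
    thus "finprod R e {..n} \<in> Y" using i(2) by simp
  qed
  have "finprod R e {..n} \<notin> f (Suc n)"
    by (rule fp_notin_prime[OF fP _ efc]) (use enot in auto)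
  moreover have "\<zero> \<in> f (Suc n)" using additive_subgroup.zero_closed[OF ideal.axioms(1)[OF fI]] by simp
  ultimately have nz: "finprod R e {..n} \<noteq> \<zero>" by metis
  obtain j where j: "j \<le> n" "finprod R e ({..n} - {j}) \<in> I"
    using W efc nz inI unfolding weakly_n_absorbing_def by blast
  have "finprod R e ({..n} - {j}) \<in> f j"
    by (rule InterD[OF j(2)[unfolded I_def]]) (use j(1) in simp)
  moreover have "finprod R e ({..n} - {j}) \<notin> f j"
    by (rule fp_notin_prime[OF fP]) (use j enot ec in auto)
  ultimately show False by blast
qed

lemma max_comax:
  assumes M: "maximalideal M R" and N: "maximalideal N R" and MN: "M \<noteq> N"
  shows "M <+>\<^bsub>R\<^esub> N = carrier R"
proof -
  have iM: "ideal M R" using maximalideal.axioms(1)[OF M] .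
  have iN: "ideal N R" using maximalideal.axioms(1)[OF N] .
  define K where "K = M <+>\<^bsub>R\<^esub> N"
  have iK: "ideal K R" unfolding K_def by (rule add_ideals[OF iM iN])
  have z: "\<zero> \<in> M" "\<zero> \<in> N"
    using additive_subgroup.zero_closed[OF ideal.axioms(1)[OF iM]]
      additive_subgroup.zero_closed[OF ideal.axioms(1)[OF iN]] by auto
  have MK: "M \<subseteq> K"
  proof
    fix m assume m: "m \<in> M"
    have "m = m \<oplus> \<zero>" using ideal.Icarr[OF iM m] by simp
    thus "m \<in> K" unfolding K_def set_add_def' using m z(2) by blast
  qed
  have NK: "N \<subseteq> K"
  proof
    fix m assume m: "m \<in> N"
    have "m = \<zero> \<oplus> m" using ideal.Icarr[OF iN m] by simp
    thus "m \<in> K" unfolding K_def set_add_def' using m z(1) by blast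
  qed
  have KC: "K \<subseteq> carrier R" by (rule subsetI, rule ideal.Icarr[OF iK])
  have MC: "M \<subseteq> carrier R" by (rule subsetI, rule ideal.Icarr[OF iM])
  have "K = M \<or> K = carrier R" by (rule maximalideal.I_maximal[OF M iK MK KC])
  moreover have "K \<noteq> M"
  proof
    assume "K = M"
    hence "N \<subseteq> M" using NK by simp
    hence "M = N \<or> M = carrier R" by (rule maximalideal.I_maximal[OF N iM _ MC])
    thus False using MN maximalideal.I_notcarr[OF M] by auto
  qed
  ultimately show ?thesis unfolding K_def by simp
qed
end

theorem mainTheorem7:
  fixes R (structure) and n :: nat
  assumes "cring R" and "\<one>\<^bsub>R\<^esub> \<noteq> \<zero>\<^bsub>R\<^esub>" and "n > 0"
    and "\<And>I. ideal I R \<Longrightarrow> I \<noteq> carrier R \<Longrightarrow> weakly_n_absorbing R n I"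
  shows "krull_dim R = 0 \<and>
         (\<forall>S. (\<forall>P\<in>S. primeideal P R) \<longrightarrow>
            (\<forall>P\<in>S. \<forall>Q\<in>S. P \<noteq> Q \<longrightarrow> comaximal R P Q) \<longrightarrow>
            finite S \<and> card S \<le> n + 1) \<and>
         finite {M. maximalideal M R} \<and> card {M. maximalideal M R} \<le> n + 1"
proof -
  interpret cring R by (rule assms(1))
  have H: "\<And>I. ideal I R \<Longrightarrow> I \<noteq> carrier R \<Longrightarrow> weakly_n_absorbing R n I" by (rule assms(4))
  have kd: "krull_dim R \<le> 0" unfolding krull_dim_def
  proof (rule Sup_least)
    fix x assume "x \<in> {enat (length ps - 1) |ps. ps \<noteq> [] \<and> (\<forall>P\<in>set ps. primeideal P R) \<and> sorted_wrt (\<subset>) ps}"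
    then obtain ps where ps: "x = enat (length ps - 1)" "\<forall>P\<in>set ps. primeideal P R" "sorted_wrt (\<subset>) ps"
      by blast
    have "\<not> length ps \<ge> 2"
    proof
      assume l: "length ps \<ge> 2"
      have sub: "ps ! 0 \<subset> ps ! 1" using sorted_wrt_nth_less[OF ps(3), of 0 1] l by simp
      have m: "ps ! 0 \<in> set ps" "ps ! 1 \<in> set ps" using l by (auto intro!: nth_mem)
      have p: "primeideal (ps ! 0) R" "primeideal (ps ! 1) R" using ps(2) m by simp_all
      show False using H p(1) p(2) sub by (rule no_chain)
    qed
    hence "length ps - 1 = 0" by simp
    thus "x \<le> 0" using ps(1) by (simp add: zero_enat_def)
  qed
  have B: "\<forall>S. (\<forall>P\<in>S. primeideal P R) \<longrightarrow>
            (\<forall>P\<in>S. \<forall>Q\<in>S. P \<noteq> Q \<longrightarrow> comaximal R P Q) \<longrightarrow>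
            finite S \<and> card S \<le> n + 1"
    using comax_bound[OF H] by blast
  have "(\<forall>P\<in>{M. maximalideal M R}. primeideal P R)" using maximalideal_prime by blast
  moreover have "\<forall>P\<in>{M. maximalideal M R}. \<forall>Q\<in>{M. maximalideal M R}. P \<noteq> Q \<longrightarrow> comaximal R P Q"
    unfolding comaximal_def using max_comax by blast
  ultimately have "finite {M. maximalideal M R} \<and> card {M. maximalideal M R} \<le> n + 1"
    using B by blast
  thus ?thesis using kd B by simp
qed

end
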